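(* In the periodic lock scheduling problem, there exists an optimal schedule $\sigma$ that is periodic with period of length at most $8\Lambda$, where $\Lambda=\operatorname{lcm}(\lambda_1,\dots,\lambda_k)$.
   Context: Periodic lock scheduling problem. Time is discrete, periods $t=1,2,\dots$. There are $k$ vessel streams; stream $i$ has a direction $\delta_i\in\{D,U\}$, an integer periodicity $\lambda_i\ge1$ and an integer offset $1\le\mu_i\le\lambda_i$; $a_i(t)=1$ if $t\equiv\mu_i\pmod{\lambda_i}$ and $0$ otherwise, $a_\delta(t)=\sum_{i:\delta_i=\delta}a_i(t)$. A schedule is a sequence $\sigma=(\sigma(t))_{t\ge1}$ with $\sigma(t)\in\{D,U,W\}$ ($D$: process downstream waiting vessels and switch alignment from downstream to upstream; $U$ symmetrically; $W$: wait at current alignment); the initial orientation is arbitrary; it is feasible if the non-$W$ actions alternate between $D$ and $U$. A sequence is periodic with period $P$ if $\sigma(t)=\sigma(t+P)$ for all $t$. Queue lengths: $n_D(0)=n_U(0)=0$ and for $t\ge1$, $n_\delta(t)=0$ if $\sigma(t)=\delta$ and $n_\delta(t)=n_\delta(t-1)+a_\delta(t)$ otherwise. $C_\sigma(t)=n_D(t)+n_U(t)$ and $C_{\mathrm{avg},\sigma}=\lim_{T\to\infty}\frac1T\sum_{t=1}^TC_\sigma(t)$. A schedule is optimal if it is feasible and minimizes $C_{\mathrm{avg},\sigma}$ over all feasible schedules. *)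

theory Defs
  imports Complex_Main
begin

datatype dir = Down | Upstr

datatype action = Proc dir | Wait

text \<open>A vessel stream is a triple (direction, periodicity lambda, offset mu).\<close>
type_synonym stream = "dir \<times> nat \<times> nat"

definition valid_stream :: "stream \<Rightarrow> bool" where
  "valid_stream s = (case s of (d, l, m) \<Rightarrow> 1 \<le> l \<and> 1 \<le> m \<and> m \<le> l)"

definition arrival :: "stream \<Rightarrow> nat \<Rightarrow> nat" where
  "arrival s t = (case s of (d, l, m) \<Rightarrow> if t mod l = m mod l then 1 else 0)"

definition arrivals :: "stream list \<Rightarrow> dir \<Rightarrow> nat \<Rightarrow> nat" where
  "arrivals S d t = (\<Sum>s\<leftarrow>S. if fst s = d then arrival s t else 0)"

text \<open>Schedules are indexed by periods t = 1,2,...; the value at 0 is irrelevant.\<close>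
type_synonym schedule = "nat \<Rightarrow> action"

definition feasible :: "schedule \<Rightarrow> bool" where
  "feasible \<sigma> = (\<forall>t t' d d'. 1 \<le> t \<and> t < t' \<and> \<sigma> t = Proc d \<and> \<sigma> t' = Proc d'
      \<and> (\<forall>s. t < s \<and> s < t' \<longrightarrow> \<sigma> s = Wait) \<longrightarrow> d \<noteq> d')"

definition periodic_with :: "schedule \<Rightarrow> nat \<Rightarrow> bool" where
  "periodic_with \<sigma> P = (\<forall>t\<ge>1. \<sigma> t = \<sigma> (t + P))"

primrec queue :: "stream list \<Rightarrow> schedule \<Rightarrow> dir \<Rightarrow> nat \<Rightarrow> nat" where
  "queue S \<sigma> d 0 = 0"
| "queue S \<sigma> d (Suc t) = (if \<sigma> (Suc t) = Proc d then 0
                           else queue S \<sigma> d t + arrivals S d (Suc t))"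

definition cost :: "stream list \<Rightarrow> schedule \<Rightarrow> nat \<Rightarrow> nat" where
  "cost S \<sigma> t = queue S \<sigma> Down t + queue S \<sigma> Upstr t"

definition avg_cost_seq :: "stream list \<Rightarrow> schedule \<Rightarrow> nat \<Rightarrow> real" where
  "avg_cost_seq S \<sigma> T = (\<Sum>t=1..T. real (cost S \<sigma> t)) / real T"

definition has_avg_cost :: "stream list \<Rightarrow> schedule \<Rightarrow> real \<Rightarrow> bool" where
  "has_avg_cost S \<sigma> c = (avg_cost_seq S \<sigma> \<longlonglongrightarrow> c)"

definition optimal :: "stream list \<Rightarrow> schedule \<Rightarrow> bool" where
  "optimal S \<sigma> = (feasible \<sigma> \<and> (\<exists>c. has_avg_cost S \<sigma> c \<and>
      (\<forall>\<sigma>' c'. feasible \<sigma>' \<and> has_avg_cost S \<sigma>' c' \<longrightarrow> c \<le> c')))"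

definition Lambda :: "stream list \<Rightarrow> nat" where
  "Lambda S = foldr (\<lambda>s acc. lcm (fst (snd s)) acc) S 1"

end

theory Submission
  imports Defs
begin

fun opp :: "dir \<Rightarrow> dir" where "opp Down = Upstr" | "opp Upstr = Down"
fun pdir :: "action \<Rightarrow> dir" where "pdir (Proc d) = d" | "pdir Wait = Down"

lemma dir_neq: "(d::dir) \<noteq> e \<Longrightarrow> d = opp e" by (cases d; cases e) auto
lemma opp_neq[simp]: "opp e \<noteq> e" "e \<noteq> opp e" by (cases e; simp)+
lemma UNIV_dir: "(UNIV :: dir set) = {Down, Upstr}" using dir.exhaust by auto
lemma card_dir: "card (UNIV :: dir set) = 2" by (simp add: UNIV_dir)

lemma Lambda_Cons: "Lambda (s#S) = lcm (fst (snd s)) (Lambda S)" by (simp add: Lambda_def)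
lemma Lambda_Nil: "Lambda [] = 1" by (simp add: Lambda_def)

lemma dvd_Lambda: "s \<in> set S \<Longrightarrow> fst (snd s) dvd Lambda S"
  by (induction S) (auto simp: Lambda_Cons intro: dvd_trans[OF _ dvd_lcm2])

lemma Lambda_pos: "\<forall>s\<in>set S. valid_stream s \<Longrightarrow> Lambda S > 0"
  by (induction S) (auto simp: Lambda_Cons Lambda_Nil valid_stream_def lcm_pos_nat split: prod.splits)

lemma arrival_per:
  assumes "\<forall>s\<in>set S. valid_stream s" "x mod Lambda S = y mod Lambda S"
  shows "arrivals S d x = arrivals S d y"
  unfolding arrivals_def
proof (intro arg_cong[where f=sum_list] map_cong refl)
  fix s assume s: "s \<in> set S"
  obtain e l m where sd: "s = (e,l,m)" by (cases s) auto
  have "l dvd Lambda S" using dvd_Lambda[OF s] sd by simp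
  then have "x mod l = y mod l" using assms(2) by (metis mod_mod_cancel)
  then show "(if fst s = d then arrival s x else 0) = (if fst s = d then arrival s y else 0)"
    by (simp add: sd arrival_def)
qed

definition A :: "stream list \<Rightarrow> dir \<Rightarrow> nat \<Rightarrow> nat \<Rightarrow> nat" where
  "A S d r i = arrivals S d (r + 3 * Lambda S - i)"

lemma A_eq:
  assumes "\<forall>s\<in>set S. valid_stream s" "i \<le> 2" "i \<le> t"
  shows "A S d (t mod Lambda S) i = arrivals S d (t - i)"
proof -
  let ?L = "Lambda S"
  have L: "?L > 0" using Lambda_pos assms(1) by blast
  have e: "(t mod ?L + 3 * ?L - i) + t div ?L * ?L = (t - i) + 3 * ?L"
  proof -
    have "t div ?L * ?L + t mod ?L = t" by simp
    moreover have "i \<le> 3 * ?L" using L assms(2) by linarith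
    ultimately show ?thesis using assms(3) by linarith
  qed
  have "(t mod ?L + 3 * ?L - i) mod ?L = (t - i) mod ?L"
    by (metis e mod_mult_self1 mod_mult_self2)
  then show ?thesis unfolding A_def using arrival_per[OF assms(1)] by blast
qed

lemma queue_mono: "(\<forall>s d. \<sigma> s = Proc d \<longrightarrow> \<sigma>' s = Proc d) \<Longrightarrow> queue S \<sigma>' d t \<le> queue S \<sigma> d t"
  by (induction t) auto

lemma feas_adj: "feasible \<sigma> \<Longrightarrow> 1 \<le> s \<Longrightarrow> \<sigma> s = Proc a \<Longrightarrow> \<sigma> (Suc s) = Proc b \<Longrightarrow> a \<noteq> b"
  unfolding feasible_def by (metis Suc_lessD less_Suc_eq not_less_eq lessI)

lemma feas_gap: "feasible \<sigma> \<Longrightarrow> 1 \<le> s \<Longrightarrow> \<sigma> s = Proc a \<Longrightarrow> \<sigma> (Suc s) = Wait \<Longrightarrow> \<sigma> (Suc (Suc s)) = Proc b \<Longrightarrow> a \<noteq> b"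
proof -
  assume F: "feasible \<sigma>" and h: "1 \<le> s" "\<sigma> s = Proc a" "\<sigma> (Suc s) = Wait" "\<sigma> (Suc (Suc s)) = Proc b"
  have "\<forall>x. s < x \<and> x < Suc (Suc s) \<longrightarrow> \<sigma> x = Wait" using h(3) by (metis less_Suc_eq not_less_eq)
  then show "a \<noteq> b" using F h unfolding feasible_def by (metis lessI less_SucI)
qed


fun qf :: "stream list \<Rightarrow> nat \<times> dir \<times> bool \<times> bool \<Rightarrow> dir \<Rightarrow> nat" where
  "qf S (r,e,k,j) d = (if \<not> k then (if d = e then 0 else A S d r 0 + (if j then A S d r 1 else 0))
     else (if d = e then A S d r 0 else A S d r 0 + A S d r 1 + (if j then A S d r 2 else 0)))"

definition g :: "stream list \<Rightarrow> nat \<times> dir \<times> bool \<times> bool \<Rightarrow> nat" where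
  "g S x = qf S x Down + qf S x Upstr"

definition st :: "nat \<Rightarrow> schedule \<Rightarrow> nat \<Rightarrow> nat \<times> dir \<times> bool \<times> bool" where
  "st L \<sigma> t = (if \<sigma> t = Wait then (t mod L, pdir (\<sigma> (t-1)), True, \<sigma> (t-2) = Wait)
              else (t mod L, pdir (\<sigma> t), False, \<sigma> (t-1) = Wait))"

definition step :: "nat \<Rightarrow> nat \<times> dir \<times> bool \<times> bool \<Rightarrow> nat \<times> dir \<times> bool \<times> bool \<Rightarrow> bool" where
  "step L x y = (fst y = Suc (fst x) mod L \<and>
     ((\<not> fst (snd (snd y)) \<and> fst (snd y) \<noteq> fst (snd x) \<and> snd (snd (snd y)) = fst (snd (snd x))) \<or>
      (\<not> fst (snd (snd x)) \<and> fst (snd (snd y)) \<and> fst (snd y) = fst (snd x) \<and> snd (snd (snd y)) = snd (snd (snd x)))))"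

lemma window:
  assumes V: "\<forall>s\<in>set S. valid_stream s" and F: "feasible \<sigma>"
  and nw1: "\<not> (\<sigma> (Suc n) = Wait \<and> \<sigma> (Suc (Suc n)) = Wait)"
  and nw2: "\<not> (\<sigma> (Suc (Suc n)) = Wait \<and> \<sigma> (Suc (Suc (Suc n))) = Wait)"
  and nw3: "\<not> (\<sigma> (Suc (Suc (Suc n))) = Wait \<and> \<sigma> (Suc (Suc (Suc (Suc n)))) = Wait)"
  shows "queue S \<sigma> d (Suc (Suc (Suc (Suc n)))) = qf S (st (Lambda S) \<sigma> (Suc (Suc (Suc (Suc n))))) d"
proof -
  let ?t = "Suc (Suc (Suc (Suc n)))"
  have a0: "A S e (?t mod Lambda S) 0 = arrivals S e ?t" for e using A_eq[OF V, of 0 ?t] by simp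
  have a1: "A S e (?t mod Lambda S) 1 = arrivals S e (Suc (Suc (Suc n)))" for e using A_eq[OF V, of 1 ?t] by simp
  have a2: "A S e (?t mod Lambda S) 2 = arrivals S e (Suc (Suc n))" for e using A_eq[OF V, of 2 ?t] by simp
  have ad1: "\<And>a b. \<sigma> (Suc n) = Proc a \<Longrightarrow> \<sigma> (Suc (Suc n)) = Proc b \<Longrightarrow> a \<noteq> b"
    using feas_adj[OF F, of "Suc n"] by simp
  have ad2: "\<And>a b. \<sigma> (Suc (Suc n)) = Proc a \<Longrightarrow> \<sigma> (Suc (Suc (Suc n))) = Proc b \<Longrightarrow> a \<noteq> b"
    using feas_adj[OF F, of "Suc (Suc n)"] by simp
  have ad3: "\<And>a b. \<sigma> (Suc (Suc (Suc n))) = Proc a \<Longrightarrow> \<sigma> ?t = Proc b \<Longrightarrow> a \<noteq> b"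
    using feas_adj[OF F, of "Suc (Suc (Suc n))"] by simp
  have g1: "\<And>a b. \<sigma> (Suc n) = Proc a \<Longrightarrow> \<sigma> (Suc (Suc n)) = Wait \<Longrightarrow> \<sigma> (Suc (Suc (Suc n))) = Proc b \<Longrightarrow> a \<noteq> b"
    using feas_gap[OF F, of "Suc n"] by simp
  have g2: "\<And>a b. \<sigma> (Suc (Suc n)) = Proc a \<Longrightarrow> \<sigma> (Suc (Suc (Suc n))) = Wait \<Longrightarrow> \<sigma> ?t = Proc b \<Longrightarrow> a \<noteq> b"
    using feas_gap[OF F, of "Suc (Suc n)"] by simp
  let ?s3 = "Suc (Suc (Suc n))" and ?s2 = "Suc (Suc n)" and ?s1 = "Suc n"
  have q0: "\<And>u e. \<sigma> (Suc u) = Proc e \<Longrightarrow> queue S \<sigma> e (Suc u) = 0" by simp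
  have q1: "\<And>u e. \<sigma> (Suc u) \<noteq> Proc e \<Longrightarrow> queue S \<sigma> e (Suc u) = queue S \<sigma> e u + arrivals S e (Suc u)" by simp
  have de: "\<And>e. d = e \<or> d = opp e" using dir_neq by blast
  show ?thesis
  proof (cases "\<sigma> ?t")
    case (Proc e)
    then have st: "st (Lambda S) \<sigma> ?t = (?t mod Lambda S, e, False, \<sigma> ?s3 = Wait)" by (simp add: st_def)
    show ?thesis
    proof (cases "\<sigma> ?s3")
      case (Proc e')
      then have "e' = opp e" using ad3 \<open>\<sigma> ?t = Proc e\<close> dir_neq by metis
      then show ?thesis using de[of e] st Proc \<open>\<sigma> ?t = Proc e\<close> q0 q1 a0 by auto
    next
      case Wait
      then obtain e' where e': "\<sigma> ?s2 = Proc e'" using nw2 by (cases "\<sigma> ?s2") auto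
      then have "e' = opp e" using g2 Wait \<open>\<sigma> ?t = Proc e\<close> dir_neq by metis
      then show ?thesis using de[of e] st Wait e' \<open>\<sigma> ?t = Proc e\<close> q0 q1 a0 a1 by auto
    qed
  next
    case Wait
    then obtain e where e: "\<sigma> ?s3 = Proc e" using nw3 by (cases "\<sigma> ?s3") auto
    then have st: "st (Lambda S) \<sigma> ?t = (?t mod Lambda S, e, True, \<sigma> ?s2 = Wait)" using Wait by (simp add: st_def)
    show ?thesis
    proof (cases "\<sigma> ?s2")
      case (Proc e')
      then have "e' = opp e" using ad2 e dir_neq by metis
      then show ?thesis using de[of e] st Proc Wait e q0 q1 a0 a1 by auto
    next
      case W2: Wait
      then obtain e' where e': "\<sigma> ?s1 = Proc e'" using nw1 by (cases "\<sigma> ?s1") auto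
      then have "e' = opp e" using g1 W2 e dir_neq by metis
      then show ?thesis using de[of e] st W2 Wait e e' q0 q1 a0 a1 a2 by auto
    qed
  qed
qed

definition closedw :: "('a \<Rightarrow> 'a \<Rightarrow> bool) \<Rightarrow> 'a set \<Rightarrow> 'a list \<Rightarrow> bool" where
  "closedw R V cs = (cs \<noteq> [] \<and> set cs \<subseteq> V \<and> (\<forall>i<length cs. R (cs!i) (cs!(Suc i mod length cs))))"

lemma walk_bound:
  fixes R :: "'a \<Rightarrow> 'a \<Rightarrow> bool" and g :: "'a \<Rightarrow> real" and c :: real
  assumes fin: "finite V" and cV: "card V \<le> N" and g0: "\<forall>x. 0 \<le> g x" and c0: "0 \<le> c"
  and H: "\<forall>cs. closedw R V cs \<and> length cs \<le> N \<longrightarrow> c * length cs \<le> sum_list (map g cs)"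
  shows "(\<forall>i<n. w i \<in> V) \<Longrightarrow> (\<forall>i. Suc i < n \<longrightarrow> R (w i) (w (Suc i))) \<Longrightarrow> c * (real n - real N) \<le> (\<Sum>i<n. g (w i))"
proof (induction n arbitrary: w rule: less_induct)
  case (less n)
  show ?case
  proof (cases "n \<le> N")
    case True
    then have "c * (real n - real N) \<le> 0" using c0 by (simp add: mult_nonneg_nonpos)
    also have "0 \<le> (\<Sum>i<n. g (w i))" using g0 by (simp add: sum_nonneg)
    finally show ?thesis .
  next
    case False
    have sub: "w ` {..N} \<subseteq> V" using less.prems(1) False by auto
    have "\<not> inj_on w {..N}"
    proof
      assume "inj_on w {..N}"
      then have "card {..N} \<le> card V" using card_inj_on_le[OF _ sub fin] by blast
      then show False using cV by simp
    qed
    then obtain x y where xy: "x \<le> N" "y \<le> N" "x \<noteq> y" "w x = w y" unfolding inj_on_def by auto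
    obtain a b where ab: "a < b" "b \<le> N" "w a = w b"
    proof (cases "x < y")
      case True then show ?thesis using that xy by auto
    next
      case False then show ?thesis using that[of y x] xy by auto
    qed
    define d where "d = b - a"
    have d0: "0 < d" "d \<le> N" using ab by (auto simp: d_def)
    have bn: "b < n" using ab False by simp
    define cs where "cs = map (\<lambda>i. w (a+i)) [0..<d]"
    have lcs: "length cs = d" by (simp add: cs_def)
    have "closedw R V cs"
      unfolding closedw_def
    proof (intro conjI allI impI)
      show "cs \<noteq> []" using d0 by (simp add: cs_def)
      show "set cs \<subseteq> V" using less.prems(1) bn by (auto simp: cs_def d_def)
      fix i assume i: "i < length cs"
      show "R (cs ! i) (cs ! (Suc i mod length cs))"
      proof (cases "Suc i < d")
        case True
        then show ?thesis using less.prems(2) i bn by (auto simp: cs_def lcs d_def)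
      next
        case False
        then have "Suc i = d" using i lcs by simp
        then have "Suc i mod length cs = 0" using lcs by simp
        moreover have "R (w (a + i)) (w (Suc (a+i)))" using less.prems(2) \<open>Suc i = d\<close> bn by (auto simp: d_def)
        moreover have "Suc (a + i) = b" using \<open>Suc i = d\<close> ab by (simp add: d_def)
        ultimately show ?thesis using i lcs d0 ab(3) by (simp add: cs_def)
      qed
    qed
    moreover have "sum_list (map g cs) = (\<Sum>i<d. g (w (a+i)))"
      unfolding cs_def map_map by (simp add: sum_set_upt_conv_sum_list_nat[symmetric] lessThan_atLeast0 comp_def)
    ultimately have Hc: "c * d \<le> (\<Sum>i<d. g (w (a+i)))"
      using H d0 lcs by metis
    define w' where "w' i = (if i < a then w i else w (i + d))" for i
    have IH: "c * (real (n-d) - real N) \<le> (\<Sum>i<n-d. g (w' i))"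
    proof (rule less.IH)
      show "n - d < n" using d0 bn by simp
      show "\<forall>i<n - d. w' i \<in> V" using less.prems(1) by (auto simp: w'_def)
      show "\<forall>i. Suc i < n - d \<longrightarrow> R (w' i) (w' (Suc i))"
      proof (intro allI impI)
        fix i assume i: "Suc i < n - d"
        consider "Suc i < a" | "Suc i = a" | "a \<le> i" by linarith
        then show "R (w' i) (w' (Suc i))"
        proof cases
          case 1 then show ?thesis using less.prems(2) bn ab by (auto simp: w'_def)
        next
          case 2
          then have "R (w i) (w a)" using less.prems(2) bn ab by (metis less_trans)
          then show ?thesis using 2 ab by (auto simp: w'_def d_def)
        next
          case 3
          then have "R (w (i+d)) (w (Suc (i+d)))" using less.prems(2) i by auto
          then show ?thesis using 3 by (auto simp: w'_def)
        qed
      qed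
    qed
    have s1: "(\<Sum>i<n. g (w i)) = (\<Sum>i\<in>{0..<a}. g (w i)) + (\<Sum>i\<in>{a..<b}. g (w i)) + (\<Sum>i\<in>{b..<n}. g (w i))"
      using ab bn by (simp add: lessThan_atLeast0 sum.atLeastLessThan_concat)
    have s2: "(\<Sum>i\<in>{a..<b}. g (w i)) = (\<Sum>i<d. g (w (a+i)))"
    proof -
      have "(\<Sum>i\<in>{0+a..<d+a}. g (w i)) = (\<Sum>i\<in>{0..<d}. g (w (i+a)))" by (rule sum.shift_bounds_nat_ivl)
      then show ?thesis using ab by (simp add: d_def lessThan_atLeast0 add.commute)
    qed
    have s3: "(\<Sum>i<n-d. g (w' i)) = (\<Sum>i\<in>{0..<a}. g (w i)) + (\<Sum>i\<in>{b..<n}. g (w i))"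
    proof -
      have "(\<Sum>i<n-d. g (w' i)) = (\<Sum>i\<in>{0..<a}. g (w' i)) + (\<Sum>i\<in>{a..<n-d}. g (w' i))"
        using ab bn by (simp add: lessThan_atLeast0 sum.atLeastLessThan_concat d_def)
      moreover have "(\<Sum>i\<in>{0..<a}. g (w' i)) = (\<Sum>i\<in>{0..<a}. g (w i))" by (simp add: w'_def)
      moreover have "(\<Sum>i\<in>{a..<n-d}. g (w' i)) = (\<Sum>i\<in>{a..<n-d}. g (w (i+d)))" by (simp add: w'_def)
      moreover have "(\<Sum>i\<in>{a+d..<(n-d)+d}. g (w i)) = (\<Sum>i\<in>{a..<n-d}. g (w (i+d)))" by (rule sum.shift_bounds_nat_ivl)
      moreover have "a + d = b" "n - d + d = n" using ab bn by (auto simp: d_def)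
      ultimately show ?thesis by simp
    qed
    have "c * (real n - real N) = c * d + c * (real (n-d) - real N)" using d0 bn ab
      by (simp add: of_nat_diff algebra_simps d_def)
    also have "\<dots> \<le> (\<Sum>i<d. g (w (a+i))) + (\<Sum>i<n-d. g (w' i))" using Hc IH by linarith
    also have "\<dots> = (\<Sum>i<n. g (w i))" using s1 s2 s3 by simp
    finally show ?thesis .
  qed
qed

lemma cesaro_periodic:
  fixes f :: "nat \<Rightarrow> real"
  assumes m: "0 < m" and per: "\<forall>t\<ge>t0. f (t + m) = f t"
  shows "(\<lambda>T. (\<Sum>t=1..T. f t) / real T) \<longlonglongrightarrow> (\<Sum>t\<in>{t0..<t0+m}. f t) / real m"
proof -
  define S where "S = (\<Sum>t\<in>{t0..<t0+m}. f t)"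
  have win: "(\<Sum>t\<in>{t0+k..<t0+k+m}. f t) = S" for k
  proof (induction k)
    case 0 then show ?case by (simp add: S_def)
  next
    case (Suc k)
    have "(\<Sum>t\<in>{t0+k..<t0+k+m}. f t) = f (t0+k) + (\<Sum>t\<in>{Suc (t0+k)..<t0+k+m}. f t)"
      using m by (simp add: sum.atLeast_Suc_lessThan)
    moreover have "(\<Sum>t\<in>{t0 + Suc k..<t0 + Suc k + m}. f t) = (\<Sum>t\<in>{Suc (t0+k)..<t0+k+m}. f t) + f (t0+k+m)"
      using m by simp
    moreover have "f (t0+k+m) = f (t0+k)" using per by simp
    ultimately show ?case using Suc by simp
  qed
  define F where "F T = (\<Sum>t=1..T. f t)" for T
  have Fstep: "F (T + m) = F T + S" if "t0 \<le> Suc T" for T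
  proof -
    have "F (T + m) = F T + (\<Sum>t\<in>{Suc T..<Suc T + m}. f t)"
    proof -
      have "(\<Sum>t=1..T+m. f t) = (\<Sum>t=1..T. f t) + (\<Sum>t=T+1..T+m. f t)"
        by (rule sum.ub_add_nat) simp
      moreover have "{T+1..T+m} = {Suc T..<Suc T + m}" by auto
      ultimately show ?thesis unfolding F_def by simp
    qed
    moreover have "(\<Sum>t\<in>{Suc T..<Suc T + m}. f t) = S"
      using win[of "Suc T - t0"] that by simp
    ultimately show ?thesis by simp
  qed
  define h where "h T = F T - real T * S / real m" for T
  have hper: "h (T + m) = h T" if "t0 \<le> T" for T
    using Fstep[of T] that m by (simp add: h_def field_simps)
  define B where "B = Max ((\<lambda>T. \<bar>h T\<bar>) ` {..t0+m})"
  have hB: "\<bar>h T\<bar> \<le> B" for T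
  proof (induction T rule: less_induct)
    case (less T)
    show ?case
    proof (cases "T \<le> t0 + m")
      case True then show ?thesis unfolding B_def by (intro Max_ge) auto
    next
      case False
      then have "h T = h (T - m)" using hper[of "T - m"] by simp
      then show ?thesis using less.IH[of "T - m"] m False by simp
    qed
  qed
  have B0: "0 \<le> B" using hB[of 0] by simp
  have lim: "(\<lambda>T. h T / real T) \<longlonglongrightarrow> 0"
  proof (rule tendsto_sandwich[of "\<lambda>T. - B / real T" _ _ "\<lambda>T. B / real T"])
    show "\<forall>\<^sub>F n in sequentially. - B / real n \<le> h n / real n"
    proof (intro always_eventually allI)
      fix n
      have "-B \<le> h n" using hB[of n] by simp
      then have "(-B) / real n \<le> h n / real n" by (rule divide_right_mono) simp
      then show "- B / real n \<le> h n / real n" by simp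
    qed
    show "\<forall>\<^sub>F n in sequentially. h n / real n \<le> B / real n"
      using hB by (intro always_eventually allI) (simp add: divide_right_mono abs_le_iff)
    show "(\<lambda>n. - B / real n) \<longlonglongrightarrow> 0" using lim_const_over_n[of "-B"] by simp
    show "(\<lambda>n. B / real n) \<longlonglongrightarrow> 0" by (rule lim_const_over_n)
  qed
  have "(\<lambda>T. S / real m + h T / real T) \<longlonglongrightarrow> S / real m + 0"
    by (intro tendsto_add tendsto_const lim)
  then have "(\<lambda>T. S / real m + h T / real T) \<longlonglongrightarrow> S / real m" by simp
  moreover have "\<forall>\<^sub>F T in sequentially. S / real m + h T / real T = (\<Sum>t=1..T. f t) / real T"
    unfolding eventually_sequentially
    by (rule exI[of _ 1]) (auto simp: h_def F_def field_simps)
  ultimately show ?thesis unfolding S_def by (rule Lim_transform_eventually)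
qed

definition domin :: "schedule \<Rightarrow> schedule \<Rightarrow> bool" where
  "domin \<sigma> \<sigma>' = (\<forall>s d. \<sigma> s = Proc d \<longrightarrow> \<sigma>' s = Proc d)"

lemma opp_eq: "(opp a = b) \<longleftrightarrow> (a \<noteq> b)" by (cases a; cases b) auto

lemma fill_feasible:
  assumes F: "feasible \<sigma>" and t: "2 \<le> t" and h: "\<sigma> (t-1) = Proc e" "\<sigma> t = Wait" "\<sigma> (Suc t) = Wait"
  shows "feasible (\<sigma>(t := Proc (opp e), Suc t := Proc e))" (is "feasible ?s")
  unfolding feasible_def
proof (intro allI impI)
  fix s s' d d'
  assume a: "1 \<le> s \<and> s < s' \<and> ?s s = Proc d \<and> ?s s' = Proc d' \<and> (\<forall>x. s < x \<and> x < s' \<longrightarrow> ?s x = Wait)"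
  then have s1: "1 \<le> s" and ss: "s < s'" and ps: "?s s = Proc d" and ps': "?s s' = Proc d'"
    and bw: "\<And>x. s < x \<Longrightarrow> x < s' \<Longrightarrow> ?s x = Wait" by auto
  consider "s' < t" | "s' = t" | "s' = Suc t" | "Suc t < s'" by linarith
  then show "d \<noteq> d'"
  proof cases
    case 1
    then have "\<sigma> s = Proc d" "\<sigma> s' = Proc d'" "\<forall>x. s < x \<and> x < s' \<longrightarrow> \<sigma> x = Wait"
      using ps ps' bw ss by auto
    then show ?thesis using F s1 ss unfolding feasible_def by blast
  next
    case 2
    have "s = t - 1"
    proof (rule ccontr)
      assume "s \<noteq> t - 1"
      then have "s < t - 1" using ss 2 by simp
      then have "?s (t-1) = Wait" using bw[of "t-1"] 2 t by simp
      moreover have "t - 1 \<noteq> t" "t - 1 \<noteq> Suc t" using t by auto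
      ultimately show False using h(1) by simp
    qed
    moreover have "t - 1 \<noteq> t" "t - 1 \<noteq> Suc t" using t by auto
    ultimately show ?thesis using ps ps' 2 t h by auto
  next
    case 3
    have "s = t"
    proof (rule ccontr)
      assume "s \<noteq> t"
      then have "s < t" using ss 3 by simp
      then show False using bw[of t] 3 by simp
    qed
    then show ?thesis using ps ps' 3 by (auto simp: opp_eq)
  next
    case 4
    have "Suc t \<le> s"
    proof (rule ccontr)
      assume "\<not> Suc t \<le> s"
      then show False using bw[of "Suc t"] 4 by simp
    qed
    show ?thesis
    proof (cases "s = Suc t")
      case True
      have "\<sigma> s' = Proc d'" using ps' 4 by simp
      moreover have "\<forall>x. t - 1 < x \<and> x < s' \<longrightarrow> \<sigma> x = Wait"
      proof (intro allI impI)
        fix x assume x: "t - 1 < x \<and> x < s'"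
        then consider "x = t" | "x = Suc t" | "Suc t < x" using t by linarith
        then show "\<sigma> x = Wait"
        proof cases
          case 3 then show ?thesis using bw[of x] x True by simp
        qed (use h in auto)
      qed
      moreover have "1 \<le> t - 1" "t - 1 < s'" using t 4 by auto
      ultimately have "e \<noteq> d'" using F h(1) unfolding feasible_def by blast
      then show ?thesis using ps True by simp
    next
      case False
      then have "Suc t < s" using \<open>Suc t \<le> s\<close> by simp
      then have "\<sigma> s = Proc d" "\<sigma> s' = Proc d'" "\<forall>x. s < x \<and> x < s' \<longrightarrow> \<sigma> x = Wait"
        using ps ps' bw ss by auto
      then show ?thesis using F s1 ss unfolding feasible_def by blast
    qed
  qed
qed

lemma init_nonwait:
  assumes F: "feasible \<sigma>"
  shows "\<exists>\<sigma>1. feasible \<sigma>1 \<and> domin \<sigma> \<sigma>1 \<and> \<sigma>1 1 \<noteq> Wait"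
proof (cases "\<sigma> 1 = Wait")
  case False then show ?thesis using F by (auto simp: domin_def)
next
  case W1: True
  show ?thesis
  proof (cases "\<exists>s. 1 \<le> s \<and> \<sigma> s \<noteq> Wait")
    case True
    define q where "q = (LEAST s. 1 \<le> s \<and> \<sigma> s \<noteq> Wait)"
    have q: "1 \<le> q" "\<sigma> q \<noteq> Wait" using LeastI_ex[OF True] unfolding q_def by auto
    have qmin: "\<And>s. 1 \<le> s \<Longrightarrow> s < q \<Longrightarrow> \<sigma> s = Wait" using not_less_Least unfolding q_def by blast
    obtain e where e: "\<sigma> q = Proc e" using q(2) by (cases "\<sigma> q") auto
    have q2: "2 \<le> q" using q W1 by (cases "q = 1") auto
    define \<sigma>1 where "\<sigma>1 = \<sigma>(1 := Proc (opp e))"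
    have "feasible \<sigma>1"
      unfolding feasible_def
    proof (intro allI impI)
      fix s s' d d'
      assume a: "1 \<le> s \<and> s < s' \<and> \<sigma>1 s = Proc d \<and> \<sigma>1 s' = Proc d' \<and> (\<forall>x. s < x \<and> x < s' \<longrightarrow> \<sigma>1 x = Wait)"
      show "d \<noteq> d'"
      proof (cases "s = 1")
        case True
        have "s' = q"
        proof (rule ccontr)
          assume "s' \<noteq> q"
          moreover have "\<sigma> s' \<noteq> Wait" using a True by (auto simp: \<sigma>1_def)
          then have "q \<le> s'" using qmin[of s'] a True by force
          ultimately have "q < s'" by simp
          then have "\<sigma>1 q = Wait" using a True q2 by auto
          then show False using q2 e by (simp add: \<sigma>1_def)
        qed
        then show ?thesis using a True e q2 by (auto simp: \<sigma>1_def opp_eq)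
      next
        case False
        then have "1 < s" using a by simp
        then have "\<sigma> s = Proc d" "\<sigma> s' = Proc d'" "\<forall>x. s < x \<and> x < s' \<longrightarrow> \<sigma> x = Wait"
          using a by (auto simp: \<sigma>1_def)
        then show ?thesis using F a unfolding feasible_def by blast
      qed
    qed
    moreover have "domin \<sigma> \<sigma>1" using W1 by (auto simp: domin_def \<sigma>1_def)
    ultimately show ?thesis by (auto simp: \<sigma>1_def)
  next
    case False
    define \<sigma>1 where "\<sigma>1 = \<sigma>(1 := Proc Down)"
    have "feasible \<sigma>1"
      unfolding feasible_def
    proof (intro allI impI)
      fix s s' d d'
      assume a: "1 \<le> s \<and> s < s' \<and> \<sigma>1 s = Proc d \<and> \<sigma>1 s' = Proc d' \<and> (\<forall>x. s < x \<and> x < s' \<longrightarrow> \<sigma>1 x = Wait)"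
      then have "\<sigma> s' = Proc d'" by (auto simp: \<sigma>1_def split: if_splits)
      then show "d \<noteq> d'" using False a by auto
    qed
    moreover have "domin \<sigma> \<sigma>1" using W1 by (auto simp: domin_def \<sigma>1_def)
    ultimately show ?thesis by (auto simp: \<sigma>1_def)
  qed
qed

lemma canon_aux:
  assumes F: "feasible \<sigma>"
  shows "\<exists>\<sigma>'. feasible \<sigma>' \<and> domin \<sigma> \<sigma>' \<and> \<sigma>' 1 \<noteq> Wait \<and>
           (\<forall>t. 1 \<le> t \<and> t < T \<longrightarrow> \<not> (\<sigma>' t = Wait \<and> \<sigma>' (Suc t) = Wait))"
proof (induction T)
  case 0 then show ?case using init_nonwait[OF F] by auto
next
  case (Suc T)
  then obtain \<sigma>' where s: "feasible \<sigma>'" "domin \<sigma> \<sigma>'" "\<sigma>' 1 \<noteq> Wait"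
    and nw: "\<forall>t. 1 \<le> t \<and> t < T \<longrightarrow> \<not> (\<sigma>' t = Wait \<and> \<sigma>' (Suc t) = Wait)" by blast
  show ?case
  proof (cases "1 \<le> T \<and> \<sigma>' T = Wait \<and> \<sigma>' (Suc T) = Wait")
    case False
    then show ?thesis using s nw by (intro exI[of _ \<sigma>']) (auto simp: less_Suc_eq)
  next
    case True
    then have T2: "2 \<le> T" using s(3) by (cases "T = 1") auto
    have "\<sigma>' (T - 1) \<noteq> Wait" using nw[rule_format, of "T - 1"] T2 True by auto
    then obtain e where e: "\<sigma>' (T - 1) = Proc e" by (cases "\<sigma>' (T - 1)") auto
    define \<sigma>'' where "\<sigma>'' = \<sigma>'(T := Proc (opp e), Suc T := Proc e)"
    have "feasible \<sigma>''" unfolding \<sigma>''_def using fill_feasible[OF s(1) T2 e] True by blast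
    moreover have "domin \<sigma> \<sigma>''" using s(2) True unfolding domin_def \<sigma>''_def by auto
    moreover have "\<sigma>'' 1 \<noteq> Wait" using s(3) by (simp add: \<sigma>''_def)
    moreover have "\<forall>t. 1 \<le> t \<and> t < Suc T \<longrightarrow> \<not> (\<sigma>'' t = Wait \<and> \<sigma>'' (Suc t) = Wait)"
    proof (intro allI impI)
      fix t assume t: "1 \<le> t \<and> t < Suc T"
      consider "Suc t < T" | "Suc t = T" | "t = T" using t by linarith
      then show "\<not> (\<sigma>'' t = Wait \<and> \<sigma>'' (Suc t) = Wait)"
      proof cases
        case 1 then show ?thesis using nw t by (auto simp: \<sigma>''_def)
      next
        case 2
        then have "t = T - 1" by simp
        then have "\<sigma>'' t = Proc e" using e T2 by (simp add: \<sigma>''_def)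
        then show ?thesis by simp
      next
        case 3 then show ?thesis by (simp add: \<sigma>''_def)
      qed
    qed
    ultimately show ?thesis by blast
  qed
qed

lemma st_step:
  assumes F: "feasible \<sigma>" and L: "0 < L"
  and nw1: "\<not> (\<sigma> (Suc n) = Wait \<and> \<sigma> (Suc (Suc n)) = Wait)"
  and nw2: "\<not> (\<sigma> (Suc (Suc n)) = Wait \<and> \<sigma> (Suc (Suc (Suc n))) = Wait)"
  shows "step L (st L \<sigma> (Suc (Suc n))) (st L \<sigma> (Suc (Suc (Suc n))))"
proof -
  let ?t = "Suc (Suc n)"
  have r: "Suc (?t mod L) mod L = Suc ?t mod L" by (simp add: mod_Suc_eq)
  show ?thesis
  proof (cases "\<sigma> (Suc ?t)")
    case (Proc b)
    show ?thesis
    proof (cases "\<sigma> ?t")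
      case (Proc a)
      then have "a \<noteq> b" using feas_adj[OF F, of ?t] \<open>\<sigma> (Suc ?t) = Proc b\<close> by simp
      then show ?thesis using Proc \<open>\<sigma> (Suc ?t) = Proc b\<close> r by (simp add: st_def step_def)
    next
      case Wait
      then obtain a where a: "\<sigma> (Suc n) = Proc a" using nw1 by (cases "\<sigma> (Suc n)") auto
      then have "a \<noteq> b" using feas_gap[OF F, of "Suc n"] Wait \<open>\<sigma> (Suc ?t) = Proc b\<close> by simp
      then show ?thesis using Wait a \<open>\<sigma> (Suc ?t) = Proc b\<close> r by (simp add: st_def step_def)
    qed
  next
    case Wait
    then obtain a where a: "\<sigma> ?t = Proc a" using nw2 by (cases "\<sigma> ?t") auto
    then show ?thesis using Wait r by (simp add: st_def step_def)
  qed
qed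

lemma feasible_local:
  assumes nw: "\<forall>t. \<not> (\<sigma> t = Wait \<and> \<sigma> (Suc t) = Wait)"
  and ad: "\<forall>t a b. \<sigma> t = Proc a \<and> \<sigma> (Suc t) = Proc b \<longrightarrow> a \<noteq> b"
  and gp: "\<forall>t a b. \<sigma> t = Proc a \<and> \<sigma> (Suc t) = Wait \<and> \<sigma> (Suc (Suc t)) = Proc b \<longrightarrow> a \<noteq> b"
  shows "feasible \<sigma>"
  unfolding feasible_def
proof (intro allI impI)
  fix t t' d d'
  assume a: "1 \<le> t \<and> t < t' \<and> \<sigma> t = Proc d \<and> \<sigma> t' = Proc d' \<and> (\<forall>s. t < s \<and> s < t' \<longrightarrow> \<sigma> s = Wait)"
  consider "t' = Suc t" | "t' = Suc (Suc t)" | "Suc (Suc t) < t'" using a by linarith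
  then show "d \<noteq> d'"
  proof cases
    case 1 then show ?thesis using ad a by blast
  next
    case 2
    then have "\<sigma> (Suc t) = Wait" using a by auto
    then show ?thesis using gp a 2 by blast
  next
    case 3
    then have "\<sigma> (Suc t) = Wait" "\<sigma> (Suc (Suc t)) = Wait" using a by auto
    then show ?thesis using nw by blast
  qed
qed

definition act :: "nat \<times> dir \<times> bool \<times> bool \<Rightarrow> action" where
  "act x = (if fst (snd (snd x)) then Wait else Proc (fst (snd x)))"

definition csched :: "(nat \<times> dir \<times> bool \<times> bool) list \<Rightarrow> schedule" where
  "csched cs t = act (cs ! ((t + (length cs - fst (cs ! 0))) mod length cs))"

definition Vset :: "nat \<Rightarrow> (nat \<times> dir \<times> bool \<times> bool) set" where
  "Vset L = {0..<L} \<times> UNIV \<times> UNIV \<times> UNIV"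

locale cyc =
  fixes L :: nat and cs :: "(nat \<times> dir \<times> bool \<times> bool) list"
  assumes L: "0 < L" and cl: "closedw (step L) (Vset L) cs"
begin

abbreviation "m \<equiv> length cs"
abbreviation "r0 \<equiv> fst (cs ! 0)"
definition idx :: "nat \<Rightarrow> nat" where "idx t = (t + (m - r0)) mod m"

lemma m0: "0 < m" using cl by (simp add: closedw_def)

lemma inV: "i < m \<Longrightarrow> fst (cs ! i) < L"
  using cl by (auto simp: closedw_def Vset_def dest!: nth_mem)

lemma stp: "step L (cs ! (i mod m)) (cs ! (Suc i mod m))"
proof -
  have "i mod m < m" using m0 by simp
  then have "step L (cs ! (i mod m)) (cs ! (Suc (i mod m) mod m))" using cl by (simp add: closedw_def)
  then show ?thesis by (simp add: mod_Suc_eq)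
qed

lemma fst_mod: "fst (cs ! (i mod m)) = (r0 + i) mod L"
proof (induction i)
  case 0 then show ?case using inV[of 0] m0 by simp
next
  case (Suc i)
  have "fst (cs ! (Suc i mod m)) = Suc (fst (cs ! (i mod m))) mod L" using stp[of i] by (simp add: step_def)
  then show ?case using Suc by (simp add: mod_Suc_eq)
qed

lemma mL: "m mod L = 0"
proof -
  have "r0 = (r0 + m) mod L" using fst_mod[of m] by simp
  moreover have "r0 < L" using inV[of 0] m0 by simp
  ultimately have "(r0 + m) mod L = r0 mod L" by simp
  then have "L dvd (r0 + m) - r0" using mod_eq_dvd_iff_nat[of r0 "r0 + m" L] by simp
  then show ?thesis by simp
qed

lemma r0m: "r0 \<le> m"
proof -
  have "L \<le> m" using mL m0 L by (metis mod_eq_0_iff_dvd dvd_imp_le)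
  then show ?thesis using inV[of 0] m0 by simp
qed

lemma fst_idx: "fst (cs ! idx t) = t mod L"
proof -
  have "fst (cs ! idx t) = (r0 + (t + (m - r0))) mod L" unfolding idx_def by (rule fst_mod)
  also have "r0 + (t + (m - r0)) = t + m" using r0m by simp
  finally show ?thesis using mL by (simp add: mod_add_right_eq[symmetric])
qed

lemma idx_Suc: "idx (Suc t) = Suc (idx t) mod m"
  unfolding idx_def by (simp add: mod_Suc_eq)

lemma idx_lt: "idx t < m" unfolding idx_def using m0 by simp

lemma stp_idx: "step L (cs ! idx t) (cs ! idx (Suc t))"
  using stp[of "t + (m - r0)"] unfolding idx_def by simp

lemma cs_t: "csched cs t = act (cs ! idx t)" unfolding csched_def idx_def ..

lemma stp_tuple:
  obtains r e k j r' e' k' j' where "cs ! idx t = (r,e,k,j)" "cs ! idx (Suc t) = (r',e',k',j')"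
    "(\<not> k' \<and> e' \<noteq> e \<and> j' = k) \<or> (\<not> k \<and> k' \<and> e' = e \<and> j' = j)"
proof -
  obtain r e k j where x: "cs ! idx t = (r,e,k,j)" by (cases "cs ! idx t") auto
  obtain r' e' k' j' where y: "cs ! idx (Suc t) = (r',e',k',j')" by (cases "cs ! idx (Suc t)") auto
  show ?thesis using that[OF x y] stp_idx[of t] x y by (simp add: step_def)
qed

lemma act_eq: "act (r,e,k,j) = (if k then Wait else Proc e)" by (simp add: act_def)

lemma nw: "\<not> (csched cs t = Wait \<and> csched cs (Suc t) = Wait)"
proof -
  obtain r e k j r' e' k' j' where "cs ! idx t = (r,e,k,j)" "cs ! idx (Suc t) = (r',e',k',j')"
    "(\<not> k' \<and> e' \<noteq> e \<and> j' = k) \<or> (\<not> k \<and> k' \<and> e' = e \<and> j' = j)" by (rule stp_tuple)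
  then show ?thesis by (auto simp: cs_t act_eq)
qed

lemma adj: "csched cs t = Proc a \<Longrightarrow> csched cs (Suc t) = Proc b \<Longrightarrow> a \<noteq> b"
proof -
  obtain r e k j r' e' k' j' where "cs ! idx t = (r,e,k,j)" "cs ! idx (Suc t) = (r',e',k',j')"
    "(\<not> k' \<and> e' \<noteq> e \<and> j' = k) \<or> (\<not> k \<and> k' \<and> e' = e \<and> j' = j)" by (rule stp_tuple)
  then show "csched cs t = Proc a \<Longrightarrow> csched cs (Suc t) = Proc b \<Longrightarrow> a \<noteq> b"
    by (auto simp: cs_t act_eq split: if_splits)
qed

lemma gap: "csched cs t = Proc a \<Longrightarrow> csched cs (Suc t) = Wait \<Longrightarrow> csched cs (Suc (Suc t)) = Proc b \<Longrightarrow> a \<noteq> b"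
proof -
  obtain r e k j r' e' k' j' where 1: "cs ! idx t = (r,e,k,j)" "cs ! idx (Suc t) = (r',e',k',j')"
    "(\<not> k' \<and> e' \<noteq> e \<and> j' = k) \<or> (\<not> k \<and> k' \<and> e' = e \<and> j' = j)" by (rule stp_tuple)
  obtain r1 e1 k1 j1 r1' e1' k1' j1' where 2: "cs ! idx (Suc t) = (r1,e1,k1,j1)" "cs ! idx (Suc (Suc t)) = (r1',e1',k1',j1')"
    "(\<not> k1' \<and> e1' \<noteq> e1 \<and> j1' = k1) \<or> (\<not> k1 \<and> k1' \<and> e1' = e1 \<and> j1' = j1)" by (rule stp_tuple)
  have "r1 = r'" "e1 = e'" "k1 = k'" "j1 = j'" using 1(2) 2(1) by auto
  then show "csched cs t = Proc a \<Longrightarrow> csched cs (Suc t) = Wait \<Longrightarrow> csched cs (Suc (Suc t)) = Proc b \<Longrightarrow> a \<noteq> b"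
    using 1 2 by (auto simp: cs_t act_eq split: if_splits)
qed

lemma feas: "feasible (csched cs)"
  by (rule feasible_local) (use nw adj gap in blast)+

lemma idx_per: "idx (t + m) = idx t"
proof -
  have e: "t + m + (m - r0) = (t + (m - r0)) + m" by simp
  show ?thesis unfolding idx_def e by (rule mod_add_self2)
qed

lemma per: "periodic_with (csched cs) m"
  unfolding periodic_with_def cs_t using idx_per by simp

lemma st_idx: "st L (csched cs) (Suc (Suc n)) = cs ! idx (Suc (Suc n))"
proof -
  let ?t = "Suc (Suc n)"
  have s1: "step L (cs ! idx (Suc n)) (cs ! idx ?t)" and s2: "step L (cs ! idx n) (cs ! idx (Suc n))"
    using stp_idx by blast+
  obtain r e k j where x0: "cs ! idx ?t = (r, e, k, j)" by (cases "cs ! idx ?t") auto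
  obtain r1 e1 k1 j1 where x1: "cs ! idx (Suc n) = (r1, e1, k1, j1)" by (cases "cs ! idx (Suc n)") auto
  obtain r2 e2 k2 j2 where x2: "cs ! idx n = (r2, e2, k2, j2)" by (cases "cs ! idx n") auto
  have r: "r = ?t mod L" using fst_idx[of ?t] x0 by simp
  have S1: "(\<not> k \<and> e \<noteq> e1 \<and> j = k1) \<or> (\<not> k1 \<and> k \<and> e = e1 \<and> j = j1)"
    using s1 x0 x1 by (simp add: step_def)
  have S2: "(\<not> k1 \<and> e1 \<noteq> e2 \<and> j1 = k2) \<or> (\<not> k2 \<and> k1 \<and> e1 = e2 \<and> j1 = j2)"
    using s2 x1 x2 by (simp add: step_def)
  have a0: "csched cs ?t = act (r, e, k, j)" using x0 by (simp add: cs_t)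
  have a1: "csched cs (?t - 1) = act (r1, e1, k1, j1)" using x1 by (simp add: cs_t)
  have a2: "csched cs (?t - 2) = act (r2, e2, k2, j2)" using x2 by (simp add: cs_t)
  show ?thesis
  proof (cases k)
    case True
    then have "\<not> k1" "e = e1" "j = j1" using S1 by auto
    then have "j = k2" using S2 by auto
    then show ?thesis using True \<open>\<not> k1\<close> \<open>e = e1\<close> a0 a1 a2 x0 r
      unfolding st_def by (simp add: act_def)
  next
    case False
    then have "j = k1" using S1 by auto
    then show ?thesis using False a0 a1 x0 r
      unfolding st_def by (simp add: act_def)
  qed
qed

end

context cyc begin

lemma cost_idx:
  assumes V: "\<forall>s\<in>set S. valid_stream s" and LL: "L = Lambda S"
  shows "cost S (csched cs) (Suc (Suc (Suc (Suc n)))) = g S (cs ! idx (Suc (Suc (Suc (Suc n)))))"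
proof -
  have "queue S (csched cs) d (Suc (Suc (Suc (Suc n)))) = qf S (st (Lambda S) (csched cs) (Suc (Suc (Suc (Suc n))))) d" for d
    by (rule window[OF V feas nw nw nw])
  then show ?thesis using st_idx[of "Suc (Suc n)"] LL by (simp add: cost_def g_def)
qed

lemma avg:
  assumes V: "\<forall>s\<in>set S. valid_stream s" and LL: "L = Lambda S"
  shows "has_avg_cost S (csched cs) (sum_list (map (\<lambda>x. real (g S x)) cs) / real m)"
proof -
  define f where "f t = real (cost S (csched cs) t)" for t
  define t0 where "t0 = 4 * m + r0"
  have c4: "f t = real (g S (cs ! idx t))" if "4 \<le> t" for t
  proof -
    have "\<exists>n. t = Suc (Suc (Suc (Suc n)))" using that by (intro exI[of _ "t - 4"]) simp
    then obtain n where "t = Suc (Suc (Suc (Suc n)))" by blast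
    then show ?thesis using cost_idx[OF V LL, of n] by (simp add: f_def)
  qed
  have t04: "4 \<le> t0" using m0 unfolding t0_def by linarith
  have per: "\<forall>t\<ge>t0. f (t + m) = f t"
    using c4 t04 idx_per by simp
  have lim: "(\<lambda>T. (\<Sum>t=1..T. f t) / real T) \<longlonglongrightarrow> (\<Sum>t\<in>{t0..<t0+m}. f t) / real m"
    by (rule cesaro_periodic[OF m0 per])
  have "(\<Sum>t\<in>{0+t0..<m+t0}. f t) = (\<Sum>i\<in>{0..<m}. f (i + t0))" by (rule sum.shift_bounds_nat_ivl)
  also have "\<dots> = (\<Sum>i\<in>{0..<m}. real (g S (cs ! i)))"
  proof (rule sum.cong[OF refl])
    fix i assume i: "i \<in> {0..<m}"
    have "idx (i + t0) = (i + m * 5) mod m" unfolding idx_def t0_def using r0m by (simp add: algebra_simps)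
    also have "\<dots> = i" using i by simp
    finally show "f (i + t0) = real (g S (cs ! i))" using c4[of "i + t0"] t04 by simp
  qed
  also have "\<dots> = sum_list (map (\<lambda>x. real (g S x)) cs)"
    by (simp add: sum_list_sum_nth)
  finally have "(\<Sum>t\<in>{t0..<t0+m}. f t) = sum_list (map (\<lambda>x. real (g S x)) cs)" by (simp add: add.commute)
  then show ?thesis using lim unfolding has_avg_cost_def avg_cost_seq_def f_def by simp
qed

end

lemma finite_dir: "finite (UNIV :: dir set)" by (simp add: UNIV_dir)

lemma U3: "(UNIV :: (dir \<times> bool \<times> bool) set) = UNIV \<times> (UNIV \<times> UNIV)" by simp

lemma finite_U3: "finite (UNIV :: (dir \<times> bool \<times> bool) set)"
  unfolding U3 by (intro finite_cartesian_product finite_dir) auto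

lemma U2: "(UNIV :: (bool \<times> bool) set) = UNIV \<times> UNIV" by simp

lemma card_U3: "card (UNIV :: (dir \<times> bool \<times> bool) set) = 8"
proof -
  have "card (UNIV :: (dir \<times> bool \<times> bool) set) = card (UNIV :: dir set) * (card (UNIV :: bool set) * card (UNIV :: bool set))"
    by (simp only: U3 U2 card_cartesian_product)
  then show ?thesis using card_dir by simp
qed

lemma card_Vset: "card (Vset L) = 8 * L"
  unfolding Vset_def by (simp add: card_cartesian_product card_U3)

lemma finite_Vset: "finite (Vset L)"
  unfolding Vset_def by (simp add: finite_U3)

lemma lower:
  fixes c c' :: real
  assumes V: "\<forall>s\<in>set S. valid_stream s" and LL: "L = Lambda S"
  and F: "feasible \<sigma>" and H: "has_avg_cost S \<sigma> c'" and c0: "0 \<le> c"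
  and Hc: "\<forall>cs. closedw (step L) (Vset L) cs \<and> length cs \<le> 8 * L \<longrightarrow> c * length cs \<le> sum_list (map (\<lambda>x. real (g S x)) cs)"
  shows "c \<le> c'"
proof -
  have L0: "0 < L" using Lambda_pos[OF V] LL by simp
  have bound: "c * (real T - 3 - real (8 * L)) / real T \<le> avg_cost_seq S \<sigma> T" if T4: "4 \<le> T" for T
  proof -
    obtain \<sigma>' where s': "feasible \<sigma>'" "domin \<sigma> \<sigma>'"
      and nw: "\<forall>t. 1 \<le> t \<and> t < T \<longrightarrow> \<not> (\<sigma>' t = Wait \<and> \<sigma>' (Suc t) = Wait)"
      using canon_aux[OF F, of T] by blast
    define w where "w i = st L \<sigma>' (Suc (Suc (Suc (Suc i))))" for i
    define n where "n = T - 3"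
    have wb: "c * (real n - real (8 * L)) \<le> (\<Sum>i<n. real (g S (w i)))"
    proof -
      have cV: "card (Vset L) \<le> 8 * L" by (simp add: card_Vset)
      have g0: "\<forall>x. 0 \<le> real (g S x)" by simp
      note WB = walk_bound[OF finite_Vset cV g0 c0 Hc]
      have "\<forall>i<n. w i \<in> Vset L" using L0 by (auto simp: w_def Vset_def st_def)
      moreover have "\<forall>i. Suc i < n \<longrightarrow> step L (w i) (w (Suc i))"
      proof (intro allI impI)
        fix i assume i: "Suc i < n"
        have a: "\<not> (\<sigma>' (Suc (Suc (Suc i))) = Wait \<and> \<sigma>' (Suc (Suc (Suc (Suc i)))) = Wait)"
          using nw[rule_format, of "Suc (Suc (Suc i))"] i by (simp add: n_def)
        have b: "\<not> (\<sigma>' (Suc (Suc (Suc (Suc i)))) = Wait \<and> \<sigma>' (Suc (Suc (Suc (Suc (Suc i))))) = Wait)"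
          using nw[rule_format, of "Suc (Suc (Suc (Suc i)))"] i by (simp add: n_def)
        show "step L (w i) (w (Suc i))" unfolding w_def by (rule st_step[OF s'(1) L0 a b])
      qed
      ultimately show ?thesis using WB by blast
    qed
    have cw: "real (g S (w i)) = real (cost S \<sigma>' (Suc (Suc (Suc (Suc i)))))" if i: "i < n" for i
    proof -
      have a: "\<not> (\<sigma>' (Suc i) = Wait \<and> \<sigma>' (Suc (Suc i)) = Wait)"
        using nw[rule_format, of "Suc i"] i by (simp add: n_def)
      have b: "\<not> (\<sigma>' (Suc (Suc i)) = Wait \<and> \<sigma>' (Suc (Suc (Suc i))) = Wait)"
        using nw[rule_format, of "Suc (Suc i)"] i by (simp add: n_def)
      have c: "\<not> (\<sigma>' (Suc (Suc (Suc i))) = Wait \<and> \<sigma>' (Suc (Suc (Suc (Suc i)))) = Wait)"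
        using nw[rule_format, of "Suc (Suc (Suc i))"] i by (simp add: n_def)
      show ?thesis using window[OF V s'(1) a b c] LL by (simp add: w_def cost_def g_def)
    qed
    have "(\<Sum>i<n. real (g S (w i))) = (\<Sum>i<n. real (cost S \<sigma>' (Suc (Suc (Suc (Suc i))))))"
      using cw by (rule sum.cong[OF refl]) simp
    also have "\<dots> = (\<Sum>t\<in>(\<lambda>i. Suc (Suc (Suc (Suc i)))) ` {..<n}. real (cost S \<sigma>' t))"
      by (rule sum.reindex[symmetric, unfolded comp_def]) (simp add: inj_on_def)
    also have "\<dots> \<le> (\<Sum>t=1..T. real (cost S \<sigma>' t))"
      by (rule sum_mono2) (auto simp: n_def)
    also have "\<dots> \<le> (\<Sum>t=1..T. real (cost S \<sigma> t))"
    proof (rule sum_mono)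
      fix t
      have "queue S \<sigma>' d t \<le> queue S \<sigma> d t" for d using s'(2) queue_mono unfolding domin_def by blast
      then show "real (cost S \<sigma>' t) \<le> real (cost S \<sigma> t)" by (simp add: cost_def add_mono)
    qed
    finally have "c * (real n - real (8 * L)) \<le> (\<Sum>t=1..T. real (cost S \<sigma> t))" using wb by linarith
    moreover have "real n = real T - 3" using T4 by (simp add: n_def)
    ultimately have "c * (real T - 3 - real (8 * L)) \<le> (\<Sum>t=1..T. real (cost S \<sigma> t))" by simp
    then show ?thesis unfolding avg_cost_seq_def using T4 by (simp add: divide_right_mono)
  qed
  have "(\<lambda>T. c - c * (3 + real (8 * L)) / real T) \<longlonglongrightarrow> c - 0"
    by (intro tendsto_diff tendsto_const lim_const_over_n)
  then have l1: "(\<lambda>T. c - c * (3 + real (8 * L)) / real T) \<longlonglongrightarrow> c" by simp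
  have "\<forall>\<^sub>F T in sequentially. c - c * (3 + real (8 * L)) / real T = c * (real T - 3 - real (8 * L)) / real T"
    unfolding eventually_sequentially by (rule exI[of _ 1]) (auto simp: field_simps)
  then have l2: "(\<lambda>T. c * (real T - 3 - real (8 * L)) / real T) \<longlonglongrightarrow> c"
    using l1 by (rule Lim_transform_eventually[rotated])
  show ?thesis
    by (rule LIMSEQ_le[OF l2 H[unfolded has_avg_cost_def]]) (use bound in auto)
qed

lemma alt_cycle:
  assumes L0: "0 < L"
  shows "closedw (step L) (Vset L) (map (\<lambda>i. (i mod L, if even i then Down else Upstr, False, False)) [0..<2*L])"
  unfolding closedw_def
proof (intro conjI allI impI)
  let ?cs = "map (\<lambda>i. (i mod L, if even i then Down else Upstr, False, False)) [0..<2*L]"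
  show "?cs \<noteq> []" using L0 by simp
  show "set ?cs \<subseteq> Vset L" using L0 by (auto simp: Vset_def)
  fix i assume i: "i < length ?cs"
  then have i2: "i < 2 * L" by simp
  have fst_ok: "(Suc i mod (2*L)) mod L = Suc (i mod L) mod L"
    by (simp add: mod_mod_cancel mod_Suc_eq)
  have par: "even (Suc i mod (2*L)) \<longleftrightarrow> \<not> even i"
  proof (cases "Suc i < 2 * L")
    case True then show ?thesis by simp
  next
    case False
    then have "Suc i = 2 * L" using i2 by simp
    then have "Suc i mod (2*L) = 0" "even (Suc i)" by simp_all
    then show ?thesis by simp
  qed
  have "Suc i mod (2 * L) < 2 * L" using L0 by simp
  then show "step L (?cs ! i) (?cs ! (Suc i mod length ?cs))"
    using i2 fst_ok par by (simp add: step_def)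
qed

theorem lemma6:
  fixes S :: "stream list"
  assumes "\<forall>s\<in>set S. valid_stream s"
  shows "\<exists>\<sigma> P. optimal S \<sigma> \<and> 1 \<le> P \<and> P \<le> 8 * Lambda S \<and> periodic_with \<sigma> P"
proof -
  note V = assms
  define L where "L = Lambda S"
  have L0: "0 < L" using Lambda_pos[OF V] by (simp add: L_def)
  define Cs where "Cs = {cs. closedw (step L) (Vset L) cs \<and> length cs \<le> 8 * L}"
  define ratio where "ratio cs = sum_list (map (\<lambda>x. real (g S x)) cs) / real (length cs)" for cs
  have finCs: "finite Cs"
    by (rule finite_subset[OF _ finite_lists_length_le[OF finite_Vset[of L], of "8 * L"]])
       (auto simp: Cs_def closedw_def)
  have "map (\<lambda>i. (i mod L, if even i then Down else Upstr, False, False)) [0..<2*L] \<in> Cs"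
    using alt_cycle[OF L0] by (simp add: Cs_def)
  then have neCs: "Cs \<noteq> {}" by blast
  define c where "c = Min (ratio ` Cs)"
  have "c \<in> ratio ` Cs" unfolding c_def using finCs neCs by (intro Min_in) auto
  then obtain cs0 where cs0: "cs0 \<in> Cs" "ratio cs0 = c" by blast
  have cmin: "c \<le> ratio cs" if "cs \<in> Cs" for cs unfolding c_def using finCs that by (intro Min_le) auto
  have cl0: "closedw (step L) (Vset L) cs0" and len0: "length cs0 \<le> 8 * L" using cs0 by (auto simp: Cs_def)
  interpret C: cyc L cs0 using L0 cl0 by unfold_locales
  have c0: "0 \<le> c" unfolding cs0(2)[symmetric] ratio_def by (intro divide_nonneg_nonneg sum_list_nonneg) auto
  have Hc: "\<forall>cs. closedw (step L) (Vset L) cs \<and> length cs \<le> 8 * L \<longrightarrow> c * length cs \<le> sum_list (map (\<lambda>x. real (g S x)) cs)"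
  proof (intro allI impI)
    fix cs assume h: "closedw (step L) (Vset L) cs \<and> length cs \<le> 8 * L"
    then have "cs \<in> Cs" by (simp add: Cs_def)
    then have "c \<le> ratio cs" by (rule cmin)
    moreover have "0 < length cs" using h by (simp add: closedw_def)
    ultimately show "c * length cs \<le> sum_list (map (\<lambda>x. real (g S x)) cs)"
      unfolding ratio_def by (simp add: pos_le_divide_eq)
  qed
  have opt: "optimal S (csched cs0)"
    unfolding optimal_def
  proof (intro conjI exI)
    show "feasible (csched cs0)" by (rule C.feas)
    show "has_avg_cost S (csched cs0) c"
      using C.avg[OF V L_def] cs0(2) by (simp add: ratio_def)
    show "\<forall>\<sigma>' c'. feasible \<sigma>' \<and> has_avg_cost S \<sigma>' c' \<longrightarrow> c \<le> c'"
      using lower[OF V L_def _ _ c0 Hc] by blast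
  qed
  show ?thesis
    using opt C.m0 len0 C.per by (intro exI[of _ "csched cs0"] exI[of _ "length cs0"]) (simp add: L_def Suc_le_eq)
qed

end
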